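(* Let $\sigma > -2$ and $p < -1-\sigma$, and set \[ a = \frac{\sigma+2}{1-p} \in (0,1), \qquad c_a = \big(a(1-a)\big)^{1/(p-1)}, \qquad u_a(x) = c_a x^a . \] Then there exists a one-parameter family $\{u^\alpha\}_{\alpha>0}$ of positive functions in $C^2(0,+\infty)$, each solving \[ u''(x) + x^\sigma u(x)^p = 0 \quad \text{for } x>0, \] such that $\lim_{x\searrow 0} u^\alpha(x)/u_a(x) = 1$ for every $\alpha>0$, and such that whenever $\alpha_1 > \alpha_2 > 0$, \[ u^{\alpha_1}(x) > u^{\alpha_2}(x) > u_a(x) \quad \text{for all } x > 0 . \]
   Context: The function $u_a$ is itself a positive solution of the same equation on $(0,+\infty)$. *)

theory Defs
  imports "HOL-Analysis.Analysis"
begin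

definition C2_on :: "real set \<Rightarrow> (real \<Rightarrow> real) \<Rightarrow> bool" where
  "C2_on S f \<longleftrightarrow> (\<exists>f' f''. (\<forall>x\<in>S. (f has_real_derivative f' x) (at x)) \<and>
                        (\<forall>x\<in>S. (f' has_real_derivative f'' x) (at x)) \<and>
                        continuous_on S f'')"

definition expo_a :: "real \<Rightarrow> real \<Rightarrow> real" where
  "expo_a \<sigma> p = (\<sigma> + 2) / (1 - p)"

definition const_c :: "real \<Rightarrow> real \<Rightarrow> real" where
  "const_c \<sigma> p = (expo_a \<sigma> p * (1 - expo_a \<sigma> p)) powr (1 / (p - 1))"

definition u_sing :: "real \<Rightarrow> real \<Rightarrow> real \<Rightarrow> real" where
  "u_sing \<sigma> p x = const_c \<sigma> p * x powr (expo_a \<sigma> p)"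

end

theory Submission
  imports Defs
begin

lemma exp_tail_has_integral:
  fixes k :: real assumes "k > 0"
  shows "((\<lambda>s. exp (-(k * s))) has_integral (exp (-(k * t))/k)) {t..}"
  using has_integral_exp_minus_to_infinity[OF assms, of t] by simp

lemma tail_bound_integrable:
  fixes h :: "real \<Rightarrow> real"
  assumes hc: "continuous_on UNIV h"
    and k1: "k1 > 0" and k2: "k2 > 0" and D1: "D1 \<ge> 0" and D2: "D2 \<ge> 0"
    and hb: "\<And>s. s \<ge> t \<Longrightarrow> \<bar>h s\<bar> \<le> D1 * exp (-(k1 * s)) + D2 * exp (-(k2 * s))"
  shows "h integrable_on {t..}"
    and "\<bar>integral {t..} h\<bar> \<le> D1 * exp (-(k1 * t)) / k1 + D2 * exp (-(k2 * t)) / k2"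
proof -
  have gi: "((\<lambda>s. D1 * exp (-(k1 * s)) + D2 * exp (-(k2 * s))) has_integral
       (D1 * (exp (-(k1 * t)) / k1) + D2 * (exp (-(k2 * t)) / k2))) {t..}"
    by (intro has_integral_add has_integral_mult_right exp_tail_has_integral k1 k2)
  have meas: "h \<in> borel_measurable (lebesgue_on {t..})"
    by (rule continuous_imp_measurable_on_sets_lebesgue) (auto intro: continuous_on_subset[OF hc])
  show "h integrable_on {t..}"
    by (rule measurable_bounded_by_integrable_imp_integrable[OF meas gi[THEN has_integral_integrable]])
       (use hb in auto)
  show "\<bar>integral {t..} h\<bar> \<le> D1 * exp (-(k1 * t)) / k1 + D2 * exp (-(k2 * t)) / k2"
    using integral_norm_bound_integral'[OF _ meas _ gi] hb by simp
qed

lemma tail_integral_deriv: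
  fixes h :: "real \<Rightarrow> real"
  assumes hc: "continuous_on UNIV h" and hi: "\<And>\<tau>. h integrable_on {\<tau>..}"
  shows "((\<lambda>\<tau>. integral {\<tau>..} h) has_real_derivative (- h x)) (at x)"
proof -
  define a where "a = x - 1"
  have eq: "integral {\<tau>..} h = integral {a..} h - integral {a..\<tau>} h" if "\<tau> \<in> {a<..}" for \<tau>
  proof -
    have un: "{a..\<tau>} \<union> {\<tau>..} = {a..}" using that by auto
    have "{a..\<tau>} \<inter> {\<tau>..} = {\<tau>}" using that by auto
    then have neg: "negligible ({a..\<tau>} \<inter> {\<tau>..})" by simp
    have "integral ({a..\<tau>} \<union> {\<tau>..}) h = integral {a..\<tau>} h + integral {\<tau>..} h"
      by (rule integral_Un[OF integrable_continuous_real[OF continuous_on_subset[OF hc]] hi neg]) auto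
    then show ?thesis using un by simp
  qed
  have d0: "((\<lambda>\<tau>. integral {a..\<tau>} h) has_real_derivative h x) (at x within {a..x+1})"
    by (rule integral_has_real_derivative[OF continuous_on_subset[OF hc]]) (auto simp: a_def)
  have "x \<in> interior {a..x+1}" by (simp add: a_def)
  then have d1: "((\<lambda>\<tau>. integral {a..\<tau>} h) has_real_derivative h x) (at x)"
    using d0 at_within_interior by metis
  have d2: "((\<lambda>\<tau>. integral {a..} h - integral {a..\<tau>} h) has_real_derivative (- h x)) (at x)"
    using DERIV_diff[OF DERIV_const d1] by simp
  show ?thesis
    by (rule has_field_derivative_transform_within_open[OF d2, of "{a<..}"])
       (auto simp: a_def eq)
qed

locale emden =
  fixes a p :: real
  assumes a0: "0 < a" and a1: "a < 1" and p1: "p < 1"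
begin

definition "c = (a * (1 - a)) powr (1 / (p - 1))"
definition "mu = a * (1 - a) * (1 - p)"
definition "bb = 2 * a - 1"
definition "GG y = a * (1 - a) * y - y powr p"
definition "phi w = GG (c + w) - mu * w"
definition "gg w = phi (max w 0)"
definition "Cc = \<bar>p\<bar> * (1 - p) * c powr (p - 2)"
definition "LL = \<bar>p\<bar> * c powr (p - 1)"

lemma aa_pos: "a * (1 - a) > 0" using a0 a1 by simp
lemma c_pos: "c > 0" unfolding c_def using aa_pos a0 a1 by simp
lemma c_pow: "c powr (p - 1) = a * (1 - a)"
proof -
  have "c powr (p - 1) = (a * (1 - a)) powr (1 / (p - 1) * (p - 1))"
    unfolding c_def powr_powr ..
  also have "1 / (p - 1) * (p - 1) = 1" using p1 by simp
  finally show ?thesis using aa_pos by simp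
qed
lemma mu_pos: "mu > 0" unfolding mu_def using aa_pos p1 by simp
lemma Cc_nonneg: "Cc \<ge> 0" unfolding Cc_def using p1 by simp
lemma LL_nonneg: "LL \<ge> 0" unfolding LL_def by simp

lemma GG_c: "GG c = 0"
proof -
  have "c powr p = c powr (p - 1) * c" using c_pos by (simp add: powr_diff)
  then show ?thesis unfolding GG_def c_pow by simp
qed

lemma phi0: "phi 0 = 0" unfolding phi_def using GG_c by simp
lemma gg0: "gg 0 = 0" unfolding gg_def using phi0 by simp

lemma phi_deriv: "y > - c \<Longrightarrow> (phi has_real_derivative (p * (c powr (p - 1) - (c + y) powr (p - 1)))) (at y)"
  unfolding phi_def GG_def
  by (auto intro!: derivative_eq_intros simp: mu_def c_pow algebra_simps)

lemma pow_tangent: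
  assumes "y \<ge> 0"
  shows "0 \<le> c powr (p - 1) - (c + y) powr (p - 1)"
    and "c powr (p - 1) - (c + y) powr (p - 1) \<le> (1 - p) * c powr (p - 2) * y"
    and "c powr (p - 1) - (c + y) powr (p - 1) \<le> c powr (p - 1)"
proof -
  show "0 \<le> c powr (p - 1) - (c + y) powr (p - 1)"
    using powr_mono2'[of "p - 1" c "c + y"] c_pos assms p1 by simp
  show "c powr (p - 1) - (c + y) powr (p - 1) \<le> c powr (p - 1)" using c_pos assms by simp
  show "c powr (p - 1) - (c + y) powr (p - 1) \<le> (1 - p) * c powr (p - 2) * y"
  proof (cases "y = 0")
    case True then show ?thesis by simp
  next
    case False
    then have y0: "y > 0" using assms by simp
    have "\<exists>z. 0 < z \<and> z < y \<and> (\<lambda>y. (c + y) powr (p - 1)) y - (\<lambda>y. (c + y) powr (p - 1)) 0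
           = (y - 0) * ((p - 1) * (c + z) powr (p - 1 - 1))"
      by (rule MVT2[OF y0]) (use c_pos in \<open>auto intro!: derivative_eq_intros\<close>)
    then obtain z where z: "0 < z" "z < y"
      and eq: "(c + y) powr (p - 1) - c powr (p - 1) = y * ((p - 1) * (c + z) powr (p - 2))"
      by (auto simp: algebra_simps)
    have "(c + z) powr (p - 2) \<le> c powr (p - 2)"
      using powr_mono2'[of "p - 2" c "c + z"] c_pos z p1 by simp
    then have "y * ((1 - p) * (c + z) powr (p - 2)) \<le> y * ((1 - p) * c powr (p - 2))"
      using y0 p1 by (intro mult_left_mono mult_left_mono) auto
    then show ?thesis using eq by (simp add: algebra_simps)
  qed
qed

lemma phi_lip:
  assumes "0 \<le> y1" "y1 \<le> y2" "y2 \<le> m"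
  shows "\<bar>phi y2 - phi y1\<bar> \<le> min (Cc * m) LL * (y2 - y1)"
proof (cases "y1 = y2")
  case True then show ?thesis by simp
next
  case False
  then have lt: "y1 < y2" using assms by simp
  obtain z where z: "y1 < z" "z < y2" and eq: "phi y2 - phi y1 = (y2 - y1) * (p * (c powr (p - 1) - (c + z) powr (p - 1)))"
    using MVT2[OF lt, of phi "\<lambda>y. p * (c powr (p - 1) - (c + y) powr (p - 1))"] phi_deriv c_pos assms
    by force
  have z0: "z \<ge> 0" using z assms by simp
  note t = pow_tangent[OF z0]
  have b1: "\<bar>p * (c powr (p - 1) - (c + z) powr (p - 1))\<bar> \<le> Cc * m"
  proof -
    have "\<bar>p * (c powr (p - 1) - (c + z) powr (p - 1))\<bar> = \<bar>p\<bar> * (c powr (p - 1) - (c + z) powr (p - 1))"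
      using t(1) by (simp add: abs_mult)
    also have "\<dots> \<le> \<bar>p\<bar> * ((1 - p) * c powr (p - 2) * z)"
      using t(2) by (intro mult_left_mono) auto
    also have "\<dots> \<le> \<bar>p\<bar> * ((1 - p) * c powr (p - 2) * m)"
      using z assms p1 by (intro mult_left_mono) auto
    finally show ?thesis by (simp add: Cc_def)
  qed
  have b2: "\<bar>p * (c powr (p - 1) - (c + z) powr (p - 1))\<bar> \<le> LL"
  proof -
    have "\<bar>p * (c powr (p - 1) - (c + z) powr (p - 1))\<bar> = \<bar>p\<bar> * (c powr (p - 1) - (c + z) powr (p - 1))"
      using t(1) by (simp add: abs_mult)
    also have "\<dots> \<le> \<bar>p\<bar> * c powr (p - 1)"
      using t(3) by (intro mult_left_mono) auto
    finally show ?thesis by (simp add: LL_def)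
  qed
  have "\<bar>phi y2 - phi y1\<bar> = (y2 - y1) * \<bar>p * (c powr (p - 1) - (c + z) powr (p - 1))\<bar>"
    using eq lt by (simp add: abs_mult)
  also have "\<dots> \<le> (y2 - y1) * min (Cc * m) LL"
    using b1 b2 lt by (intro mult_left_mono) auto
  finally show ?thesis by (simp add: mult.commute)
qed

lemma gg_lip:
  assumes "\<bar>w1\<bar> \<le> m" "\<bar>w2\<bar> \<le> m"
  shows "\<bar>gg w1 - gg w2\<bar> \<le> min (Cc * m) LL * \<bar>w1 - w2\<bar>"
proof -
  have mm: "min (Cc * m) LL \<ge> 0" using Cc_nonneg LL_nonneg assms by simp
  have key: "\<bar>gg u1 - gg u2\<bar> \<le> min (Cc * m) LL * \<bar>u1 - u2\<bar>" if "\<bar>u1\<bar> \<le> m" "\<bar>u2\<bar> \<le> m" "u1 \<le> u2" for u1 u2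
  proof -
    have "\<bar>phi (max u2 0) - phi (max u1 0)\<bar> \<le> min (Cc * m) LL * (max u2 0 - max u1 0)"
      by (rule phi_lip) (use that in auto)
    also have "\<dots> \<le> min (Cc * m) LL * \<bar>u1 - u2\<bar>"
      using that mm by (intro mult_left_mono) auto
    finally show ?thesis unfolding gg_def by (simp add: abs_minus_commute)
  qed
  show ?thesis
  proof (cases "w1 \<le> w2")
    case True then show ?thesis using key assms by blast
  next
    case False then show ?thesis using key[of w2 w1] assms by (simp add: abs_minus_commute)
  qed
qed

lemma gg_cont: "continuous_on UNIV gg"
proof -
  have "\<bar>gg x - gg y\<bar> \<le> LL * \<bar>x - y\<bar>" for x y
    using gg_lip[of x "max \<bar>x\<bar> \<bar>y\<bar>" y] LL_nonneg
    by (smt (verit, best) mult_right_mono abs_ge_zero min.cobounded2)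
  then have "LL-lipschitz_on UNIV gg"
    by (intro lipschitz_onI LL_nonneg) (simp add: dist_real_def)
  then show ?thesis using lipschitz_on_continuous_on by blast
qed

end

context emden begin

definition "dd = sqrt (bb\<^sup>2 + 4 * mu)"
definition "l1 = (dd - bb) / 2"
definition "l2 = (- dd - bb) / 2"
definition "KK = 2 * l1 + 12 * LL / (l1 - l2) + 1"
definition "kern r = (exp (l1 * r) - exp (l2 * r)) / (l1 - l2)"
definition "Top f t = integral {t..} (\<lambda>s. kern (s - t) * f s)"
definition "Aint l f t = integral {t..} (\<lambda>s. exp (l * s) * f s)"
definition "T1 f t = (- l1 * exp (- (l1 * t)) * Aint l1 f t + l2 * exp (- (l2 * t)) * Aint l2 f t) / (l1 - l2)"
definition "T2 f t = (l1\<^sup>2 * exp (- (l1 * t)) * Aint l1 f t - l2\<^sup>2 * exp (- (l2 * t)) * Aint l2 f t) / (l1 - l2) + f t"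
definition "expb D1 D2 f \<longleftrightarrow> continuous_on UNIV f \<and> D1 \<ge> 0 \<and> D2 \<ge> 0 \<and>
    (\<forall>s. \<bar>f s\<bar> \<le> D1 * exp (- (2 * l1 * s)) + D2 * exp (- (KK * s)))"

lemma dd_gt: "dd > \<bar>bb\<bar>"
proof -
  have "bb\<^sup>2 < bb\<^sup>2 + 4 * mu" using mu_pos by simp
  then have "sqrt (bb\<^sup>2) < dd" unfolding dd_def by (rule real_sqrt_less_mono)
  then show ?thesis by simp
qed
lemma l1_pos: "l1 > 0" unfolding l1_def using dd_gt by simp
lemma l2_neg: "l2 < 0" unfolding l2_def using dd_gt by simp
lemma l12: "l1 - l2 > 0" using l1_pos l2_neg by simp
lemma dd_sq: "dd\<^sup>2 = bb\<^sup>2 + 4 * mu" unfolding dd_def using mu_pos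
  by (simp add: add_nonneg_nonneg)
lemma l1_root: "l1\<^sup>2 + bb * l1 - mu = 0"
  unfolding l1_def using dd_sq by (simp add: power2_eq_square field_simps)
lemma l2_root: "l2\<^sup>2 + bb * l2 - mu = 0"
  unfolding l2_def using dd_sq by (simp add: power2_eq_square field_simps)
lemma KK_ge: "KK \<ge> 2 * l1" "KK > l1" "KK - l1 > 0"
proof -
  have "12 * LL / (l1 - l2) \<ge> 0" using LL_nonneg l12 by simp
  then show "KK \<ge> 2 * l1" "KK > l1" "KK - l1 > 0" unfolding KK_def using l1_pos by auto
qed
lemma KK_small: "3 * LL / (KK - l1) \<le> (l1 - l2) / 4"
proof -
  have "12 * LL / (l1 - l2) \<le> KK - l1" unfolding KK_def using l1_pos by simp
  then have "12 * LL \<le> (KK - l1) * (l1 - l2)" using l12 by (simp add: field_simps)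
  then show ?thesis using KK_ge l12 by (simp add: field_simps)
qed

lemma kern_bounds: "r \<ge> 0 \<Longrightarrow> 0 \<le> kern r \<and> kern r \<le> exp (l1 * r) / (l1 - l2)"
proof -
  assume r: "r \<ge> 0"
  have "l2 * r \<le> l1 * r" using r l12 by (intro mult_right_mono) auto
  then show ?thesis unfolding kern_def using l12
    by (auto simp: divide_right_mono intro!: divide_nonneg_pos)
qed

end

lemma exp_cancel1: "exp (x::real) * exp (- x) = 1" by (simp flip: exp_add)
lemma exp_cancel2: "exp (x::real) * (exp (- x) * y) = y" by (simp flip: exp_add)

lemma ode_alg: fixes l1 l2 E1 E2 X Y F bb mu :: real shows "l1 \<noteq> l2 \<Longrightarrow> (l1^2*E1*X - l2^2*E2*Y)/(l1-l2) + F - bb*((-l1*E1*X + l2*E2*Y)/(l1-l2)) - mu*((E1*X - E2*Y)/(l1-l2)) = ((l1^2 + bb*l1 - mu)*E1*X - (l2^2+bb*l2-mu)*E2*Y)/(l1-l2) + F"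
  by (simp add: diff_divide_distrib add_divide_distrib algebra_simps)

context emden begin

lemma l21: "l2 \<le> l1" using l12 by simp
lemma l1ne: "l1 \<noteq> l2" using l12 by simp

lemma expb_Aint:
  assumes e: "expb D1 D2 f" and l: "l \<le> l1"
  shows "(\<lambda>s. exp (l * s) * f s) integrable_on {t..}"
proof -
  have k1: "2 * l1 - l > 0" using l l1_pos by simp
  have k2: "KK - l > 0" using l KK_ge by simp
  have b: "\<bar>exp (l * s) * f s\<bar> \<le> D1 * exp (- ((2 * l1 - l) * s)) + D2 * exp (- ((KK - l) * s))" for s
  proof -
    have "\<bar>exp (l * s) * f s\<bar> = exp (l * s) * \<bar>f s\<bar>" by (simp add: abs_mult)
    also have "\<dots> \<le> exp (l * s) * (D1 * exp (- (2 * l1 * s)) + D2 * exp (- (KK * s)))"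
      using e unfolding expb_def by (intro mult_left_mono) auto
    also have "\<dots> = D1 * exp (- ((2 * l1 - l) * s)) + D2 * exp (- ((KK - l) * s))"
      by (simp add: algebra_simps flip: exp_add)
    finally show ?thesis .
  qed
  show ?thesis
    by (rule tail_bound_integrable(1)[OF _ k1 k2 _ _ b]) (use e in \<open>auto simp: expb_def intro!: continuous_intros\<close>)
qed

lemma expb_Top:
  assumes e: "expb D1 D2 f"
  shows "(\<lambda>s. kern (s - t) * f s) integrable_on {t..}"
    and "\<bar>Top f t\<bar> \<le> (D1 * exp (- (2 * l1 * t)) / l1 + D2 * exp (- (KK * t)) / (KK - l1)) / (l1 - l2)"
proof -
  have k2: "KK - l1 > 0" using KK_ge by simp
  have D: "D1 \<ge> 0" "D2 \<ge> 0" using e by (auto simp: expb_def)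
  have b: "\<bar>kern (s - t) * f s\<bar> \<le> (D1 * exp (- (l1 * t)) / (l1 - l2)) * exp (- (l1 * s))
             + (D2 * exp (- (l1 * t)) / (l1 - l2)) * exp (- ((KK - l1) * s))" if "s \<ge> t" for s
  proof -
    have "\<bar>kern (s - t) * f s\<bar> = kern (s - t) * \<bar>f s\<bar>" using kern_bounds[of "s - t"] that by (simp add: abs_mult)
    also have "\<dots> \<le> exp (l1 * (s - t)) / (l1 - l2) * (D1 * exp (- (2 * l1 * s)) + D2 * exp (- (KK * s)))"
      using e kern_bounds[of "s - t"] that unfolding expb_def by (intro mult_mono) auto
    also have "\<dots> = (D1 * exp (- (l1 * t)) / (l1 - l2)) * exp (- (l1 * s))
             + (D2 * exp (- (l1 * t)) / (l1 - l2)) * exp (- ((KK - l1) * s))"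
      by (simp add: field_simps add_divide_distrib flip: exp_add)
    finally show ?thesis .
  qed
  have cont: "continuous_on UNIV (\<lambda>s. kern (s - t) * f s)"
    using e l1ne unfolding expb_def kern_def by (auto intro!: continuous_intros)
  have DD: "D1 * exp (- (l1 * t)) / (l1 - l2) \<ge> 0" "D2 * exp (- (l1 * t)) / (l1 - l2) \<ge> 0"
    using D l12 by auto
  note r = tail_bound_integrable[where t=t, OF cont l1_pos k2 DD b]
  show "(\<lambda>s. kern (s - t) * f s) integrable_on {t..}" by (rule r(1))
  have "(D1 * exp (- (l1 * t)) / (l1 - l2)) * exp (- (l1 * t)) / l1 +
        (D2 * exp (- (l1 * t)) / (l1 - l2)) * exp (- ((KK - l1) * t)) / (KK - l1)
      = (D1 * exp (- (2 * l1 * t)) / l1 + D2 * exp (- (KK * t)) / (KK - l1)) / (l1 - l2)"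
  proof -
    have e1: "exp (- (2 * l1 * t)) = exp (- (l1 * t)) * exp (- (l1 * t))" by (simp flip: exp_add)
    have e2: "exp (- (KK * t)) = exp (- (l1 * t)) * exp (- ((KK - l1) * t))" by (simp add: algebra_simps flip: exp_add)
    have nz: "l1 \<noteq> 0" "KK - l1 \<noteq> 0" "l1 - l2 \<noteq> 0" using l1_pos k2 l12 by auto
    show ?thesis unfolding e1 e2 by (simp add: add_divide_distrib mult_ac)
  qed
  then show "\<bar>Top f t\<bar> \<le> (D1 * exp (- (2 * l1 * t)) / l1 + D2 * exp (- (KK * t)) / (KK - l1)) / (l1 - l2)"
    using r(2) unfolding Top_def by simp
qed

lemma expb_split:
  assumes e: "expb D1 D2 f"
  shows "Top f t = (exp (- (l1 * t)) * Aint l1 f t - exp (- (l2 * t)) * Aint l2 f t) / (l1 - l2)"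
proof -
  have i1: "(\<lambda>s. exp (l1 * s) * f s) integrable_on {t..}" using expb_Aint[OF e order.refl] .
  have i2: "(\<lambda>s. exp (l2 * s) * f s) integrable_on {t..}" using expb_Aint[OF e l21] .
  have eq: "kern (s - t) * f s = (exp (- (l1 * t)) * (exp (l1 * s) * f s) - exp (- (l2 * t)) * (exp (l2 * s) * f s)) / (l1 - l2)" for s
    unfolding kern_def by (simp add: field_simps flip: exp_add)
  have "Top f t = integral {t..} (\<lambda>s. (exp (- (l1 * t)) * (exp (l1 * s) * f s) - exp (- (l2 * t)) * (exp (l2 * s) * f s)) / (l1 - l2))"
    unfolding Top_def eq ..
  also have "\<dots> = (integral {t..} (\<lambda>s. exp (- (l1 * t)) * (exp (l1 * s) * f s)) - integral {t..} (\<lambda>s. exp (- (l2 * t)) * (exp (l2 * s) * f s))) / (l1 - l2)"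
    by (simp add: integral_diff integrable_on_cmult_left i1 i2)
  also have "\<dots> = (exp (- (l1 * t)) * Aint l1 f t - exp (- (l2 * t)) * Aint l2 f t) / (l1 - l2)"
    unfolding Aint_def by simp
  finally show ?thesis .
qed

lemma Aint_deriv:
  assumes e: "expb D1 D2 f" and l: "l \<le> l1"
  shows "(Aint l f has_real_derivative (- (exp (l * t) * f t))) (at t)"
  unfolding Aint_def
  by (rule tail_integral_deriv[OF _ expb_Aint[OF e l]]) (use e in \<open>auto simp: expb_def intro!: continuous_intros\<close>)

lemma Top_deriv:
  assumes e: "expb D1 D2 f"
  shows "(Top f has_real_derivative T1 f t) (at t)"
proof -
  have d1: "(Aint l1 f has_real_derivative (- (exp (l1 * t) * f t))) (at t)" using Aint_deriv[OF e order.refl] .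
  have d2: "(Aint l2 f has_real_derivative (- (exp (l2 * t) * f t))) (at t)" using Aint_deriv[OF e l21] .
  have eq: "Top f = (\<lambda>t. (exp (- (l1 * t)) * Aint l1 f t - exp (- (l2 * t)) * Aint l2 f t) / (l1 - l2))"
    using expb_split[OF e] by auto
  have "((\<lambda>t. (exp (- (l1 * t)) * Aint l1 f t - exp (- (l2 * t)) * Aint l2 f t) / (l1 - l2)) has_real_derivative
     ((- l1 * exp (- (l1 * t)) * Aint l1 f t + exp (- (l1 * t)) * (- (exp (l1 * t) * f t))
      - (- l2 * exp (- (l2 * t)) * Aint l2 f t + exp (- (l2 * t)) * (- (exp (l2 * t) * f t)))) / (l1 - l2))) (at t)"
    by (intro DERIV_cdivide) (auto intro!: derivative_eq_intros d1 d2 simp: algebra_simps)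
  moreover have "(- l1 * exp (- (l1 * t)) * Aint l1 f t + exp (- (l1 * t)) * (- (exp (l1 * t) * f t))
      - (- l2 * exp (- (l2 * t)) * Aint l2 f t + exp (- (l2 * t)) * (- (exp (l2 * t) * f t)))) / (l1 - l2) = T1 f t"
  proof -
    have x1: "exp (- (l1 * t)) * (- (exp (l1 * t) * f t)) = - f t" by (simp flip: exp_add)
    have x2: "exp (- (l2 * t)) * (- (exp (l2 * t) * f t)) = - f t" by (simp flip: exp_add)
    show ?thesis unfolding T1_def x1 x2 by (simp add: algebra_simps)
  qed
  ultimately show ?thesis using eq by simp
qed

lemma T1_deriv:
  assumes e: "expb D1 D2 f"
  shows "(T1 f has_real_derivative T2 f t) (at t)"
proof -
  have d1: "(Aint l1 f has_real_derivative (- (exp (l1 * t) * f t))) (at t)" using Aint_deriv[OF e order.refl] .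
  have d2: "(Aint l2 f has_real_derivative (- (exp (l2 * t) * f t))) (at t)" using Aint_deriv[OF e l21] .
  have "((\<lambda>t. (- l1 * exp (- (l1 * t)) * Aint l1 f t + l2 * exp (- (l2 * t)) * Aint l2 f t) / (l1 - l2)) has_real_derivative
     ((- l1 * (- l1 * exp (- (l1 * t)) * Aint l1 f t + exp (- (l1 * t)) * (- (exp (l1 * t) * f t)))
      + l2 * (- l2 * exp (- (l2 * t)) * Aint l2 f t + exp (- (l2 * t)) * (- (exp (l2 * t) * f t)))) / (l1 - l2))) (at t)"
    by (intro DERIV_cdivide) (auto intro!: derivative_eq_intros d1 d2 simp: algebra_simps)
  then have "(T1 f has_real_derivative
     ((- l1 * (- l1 * exp (- (l1 * t)) * Aint l1 f t + exp (- (l1 * t)) * (- (exp (l1 * t) * f t)))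
      + l2 * (- l2 * exp (- (l2 * t)) * Aint l2 f t + exp (- (l2 * t)) * (- (exp (l2 * t) * f t)))) / (l1 - l2))) (at t)"
    unfolding T1_def[abs_def] .
  moreover have "((- l1 * (- l1 * exp (- (l1 * t)) * Aint l1 f t + exp (- (l1 * t)) * (- (exp (l1 * t) * f t)))
      + l2 * (- l2 * exp (- (l2 * t)) * Aint l2 f t + exp (- (l2 * t)) * (- (exp (l2 * t) * f t)))) / (l1 - l2)) = T2 f t"
  proof -
    have x1: "exp (- (l1 * t)) * (- (exp (l1 * t) * f t)) = - f t" by (simp flip: exp_add)
    have x2: "exp (- (l2 * t)) * (- (exp (l2 * t) * f t)) = - f t" by (simp flip: exp_add)
    have ne: "l1 - l2 \<noteq> 0" using l12 by simp
    have "((- l1 * (- l1 * exp (- (l1 * t)) * Aint l1 f t + - f t)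
      + l2 * (- l2 * exp (- (l2 * t)) * Aint l2 f t + - f t)) / (l1 - l2))
      = (l1\<^sup>2 * exp (- (l1 * t)) * Aint l1 f t - l2\<^sup>2 * exp (- (l2 * t)) * Aint l2 f t + (l1 - l2) * f t) / (l1 - l2)"
      by (simp add: algebra_simps power2_eq_square)
    also have "\<dots> = T2 f t" unfolding T2_def using ne by (simp add: add_divide_distrib)
    finally show ?thesis unfolding x1 x2 .
  qed
  ultimately show ?thesis by simp
qed

lemma T_ode:
  assumes e: "expb D1 D2 f"
  shows "T2 f t - bb * T1 f t - mu * Top f t = f t"
proof -
  have r1: "mu = l1\<^sup>2 + bb * l1" and r2: "mu = l2\<^sup>2 + bb * l2" using l1_root l2_root by simp_all
  have "T2 f t - bb * T1 f t - mu * Top f t =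
     ((l1\<^sup>2 + bb * l1 - mu) * exp (- (l1 * t)) * Aint l1 f t - (l2\<^sup>2 + bb * l2 - mu) * exp (- (l2 * t)) * Aint l2 f t) / (l1 - l2) + f t"
  proof -
    have ne: "l1 \<noteq> l2" using l12 by simp
    show ?thesis unfolding T2_def T1_def expb_split[OF e] using ode_alg[OF ne] by (simp add: mult.assoc)
  qed
  then show ?thesis using l1_root l2_root by simp
qed

end

context emden begin

definition "xi = l1 * (l1 - l2) / (36 * Cc + 1)"
definition "rho t = exp (- (l1 * t)) + exp (- (KK * t))"
definition "wz (z :: real \<Rightarrow>\<^sub>C real) t = xi * exp (- (l1 * t)) + rho t * apply_bcontfun z t"
definition "BB = {z :: real \<Rightarrow>\<^sub>C real. \<forall>t. \<bar>apply_bcontfun z t\<bar> \<le> xi}"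
definition "theta = (9 * Cc * xi / l1 + 3 * LL / (KK - l1)) / (l1 - l2)"

lemma xi_pos: "xi > 0" unfolding xi_def using l1_pos l12 Cc_nonneg by simp
lemma rho_pos: "rho t > 0" unfolding rho_def by (simp add: add_pos_pos)
lemma rho_cont: "continuous_on UNIV rho" unfolding rho_def by (intro continuous_intros)

lemma theta_le: "theta \<le> 1 / 2"
proof -
  have "36 * Cc * xi \<le> l1 * (l1 - l2)"
  proof -
    have "36 * Cc * xi = l1 * (l1 - l2) * (36 * Cc / (36 * Cc + 1))"
      unfolding xi_def using Cc_nonneg by (simp add: field_simps)
    also have "\<dots> \<le> l1 * (l1 - l2) * 1"
      using Cc_nonneg l1_pos l12 by (intro mult_left_mono) auto
    finally show ?thesis by simp
  qed
  then have "9 * Cc * xi / l1 \<le> (l1 - l2) / 4" using l1_pos by (simp add: field_simps)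
  then have "9 * Cc * xi / l1 + 3 * LL / (KK - l1) \<le> (l1 - l2) / 2" using KK_small by simp
  then show ?thesis unfolding theta_def using l12 by (simp add: field_simps)
qed

lemma exp_cmp1: "s \<ge> 0 \<Longrightarrow> exp (- (KK * s)) \<le> exp (- (l1 * s))"
  using KK_ge by (simp add: mult_right_mono)
lemma exp_cmp2: "s \<le> 0 \<Longrightarrow> exp (- (l1 * s)) \<le> exp (- (KK * s))"
  using KK_ge by (simp add: mult_right_mono_neg)
lemma exp_cmp3: "exp (- (2 * l1 * s)) \<le> rho s"
proof (cases "s \<ge> 0")
  case True
  have "exp (- (2 * l1 * s)) \<le> exp (- (l1 * s))" using True l1_pos by (simp add: mult_right_mono)
  then show ?thesis unfolding rho_def by (smt (verit) exp_gt_zero)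
next
  case False
  have "exp (- (2 * l1 * s)) \<le> exp (- (KK * s))" using False KK_ge by (simp add: mult_right_mono_neg)
  then show ?thesis unfolding rho_def by (smt (verit) exp_gt_zero)
qed
lemma exp_sq: "exp (- (2 * l1 * s)) = exp (- (l1 * s)) * exp (- (l1 * s))"
  by (simp flip: exp_add)

lemma BB_closed: "closed BB"
proof -
  have "BB = cball (const_bcontfun 0) xi"
  proof (intro set_eqI iffI)
    fix z :: "real \<Rightarrow>\<^sub>C real" assume "z \<in> BB"
    then show "z \<in> cball (const_bcontfun 0) xi"
      unfolding BB_def mem_cball by (intro dist_bound) (simp add: const_bcontfun.rep_eq dist_real_def)
  next
    fix z :: "real \<Rightarrow>\<^sub>C real" assume "z \<in> cball (const_bcontfun 0) xi"
    then have "dist (const_bcontfun 0) z \<le> xi" by simp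
    show "z \<in> BB" unfolding BB_def
    proof (intro CollectI allI)
      fix t
      have "dist (apply_bcontfun (const_bcontfun 0) t) (apply_bcontfun z t) \<le> xi"
        using dist_bounded[of "const_bcontfun 0" t z] \<open>dist (const_bcontfun 0) z \<le> xi\<close> by linarith
      then show "\<bar>apply_bcontfun z t\<bar> \<le> xi" by (simp add: const_bcontfun.rep_eq dist_real_def)
    qed
  qed
  then show ?thesis by simp
qed

lemma BB_ne: "const_bcontfun 0 \<in> BB" unfolding BB_def using xi_pos by (simp add: const_bcontfun.rep_eq)

lemma wz_bound:
  assumes "z \<in> BB"
  shows "\<bar>wz z s\<bar> \<le> xi * (2 * exp (- (l1 * s)) + exp (- (KK * s)))"
proof -
  have "\<bar>wz z s\<bar> \<le> xi * exp (- (l1 * s)) + rho s * \<bar>apply_bcontfun z s\<bar>"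
    unfolding wz_def using abs_triangle_ineq[of "xi * exp (- (l1 * s))" "rho s * apply_bcontfun z s"] xi_pos rho_pos[of s]
    by (simp add: abs_mult)
  also have "\<dots> \<le> xi * exp (- (l1 * s)) + rho s * xi"
    using assms rho_pos[of s] unfolding BB_def by (intro add_left_mono mult_left_mono) auto
  finally show ?thesis unfolding rho_def by (simp add: algebra_simps)
qed

lemma wz_bound_pos: "z \<in> BB \<Longrightarrow> s \<ge> 0 \<Longrightarrow> \<bar>wz z s\<bar> \<le> 3 * xi * exp (- (l1 * s))"
proof -
  assume z: "z \<in> BB" and s: "s \<ge> 0"
  have "xi * (2 * exp (- (l1 * s)) + exp (- (KK * s))) \<le> xi * (3 * exp (- (l1 * s)))"
    using exp_cmp1[OF s] xi_pos by (intro mult_left_mono) auto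
  then show ?thesis using wz_bound[OF z, of s] by simp
qed
lemma wz_bound_neg: "z \<in> BB \<Longrightarrow> s \<le> 0 \<Longrightarrow> \<bar>wz z s\<bar> \<le> 3 * xi * exp (- (KK * s))"
proof -
  assume z: "z \<in> BB" and s: "s \<le> 0"
  have "xi * (2 * exp (- (l1 * s)) + exp (- (KK * s))) \<le> xi * (3 * exp (- (KK * s)))"
    using exp_cmp2[OF s] xi_pos by (intro mult_left_mono) auto
  then show ?thesis using wz_bound[OF z, of s] by simp
qed

lemma wz_cont: "continuous_on UNIV (wz z)"
  unfolding wz_def rho_def by (intro continuous_intros) auto

lemma gg_wz_cont: "continuous_on UNIV (\<lambda>s. gg (wz z s))"
  by (rule continuous_on_compose2[OF gg_cont wz_cont]) auto

lemma gg_abs: "\<bar>gg w\<bar> \<le> min (Cc * \<bar>w\<bar>) LL * \<bar>w\<bar>"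
  using gg_lip[of w "\<bar>w\<bar>" 0] gg0 by simp

lemma expb_gg:
  assumes z: "z \<in> BB"
  shows "expb (9 * Cc * xi\<^sup>2) (3 * LL * xi) (\<lambda>s. gg (wz z s))"
  unfolding expb_def
proof (intro conjI allI)
  show "continuous_on UNIV (\<lambda>s. gg (wz z s))" by (rule gg_wz_cont)
  show "0 \<le> 9 * Cc * xi\<^sup>2" using Cc_nonneg by simp
  show "0 \<le> 3 * LL * xi" using LL_nonneg xi_pos by simp
  fix s
  have D: "0 \<le> 9 * Cc * xi\<^sup>2 * exp (- (2 * l1 * s))" "0 \<le> 3 * LL * xi * exp (- (KK * s))"
    using Cc_nonneg LL_nonneg xi_pos by auto
  show "\<bar>gg (wz z s)\<bar> \<le> 9 * Cc * xi\<^sup>2 * exp (- (2 * l1 * s)) + 3 * LL * xi * exp (- (KK * s))"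
  proof (cases "s \<ge> 0")
    case True
    note wb = wz_bound_pos[OF z True]
    have "\<bar>gg (wz z s)\<bar> \<le> Cc * \<bar>wz z s\<bar> * \<bar>wz z s\<bar>"
      using gg_abs[of "wz z s"] by (smt (verit) abs_ge_zero min.cobounded1 mult_right_mono)
    also have "\<dots> \<le> Cc * (3 * xi * exp (- (l1 * s))) * (3 * xi * exp (- (l1 * s)))"
      using wb Cc_nonneg by (intro mult_mono mult_left_mono) auto
    also have "\<dots> = 9 * Cc * xi\<^sup>2 * exp (- (2 * l1 * s))"
      unfolding exp_sq by (simp add: power2_eq_square)
    finally show ?thesis using D by simp
  next
    case False
    note wb = wz_bound_neg[OF z] False
    have "\<bar>gg (wz z s)\<bar> \<le> LL * \<bar>wz z s\<bar>"
      using gg_abs[of "wz z s"] by (smt (verit) abs_ge_zero min.cobounded2 mult_right_mono)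
    also have "\<dots> \<le> LL * (3 * xi * exp (- (KK * s)))"
      using wz_bound_neg[OF z, of s] False LL_nonneg by (intro mult_left_mono) auto
    finally show ?thesis using D by simp
  qed
qed

lemma expb_gg_diff:
  assumes z1: "z1 \<in> BB" and z2: "z2 \<in> BB"
  shows "expb (6 * Cc * xi * dist z1 z2) (2 * LL * dist z1 z2) (\<lambda>s. gg (wz z1 s) - gg (wz z2 s))"
  unfolding expb_def
proof (intro conjI allI)
  show "continuous_on UNIV (\<lambda>s. gg (wz z1 s) - gg (wz z2 s))"
    by (intro continuous_on_diff gg_wz_cont)
  show "0 \<le> 6 * Cc * xi * dist z1 z2" using Cc_nonneg xi_pos by simp
  show "0 \<le> 2 * LL * dist z1 z2" using LL_nonneg by simp
  fix s
  define \<delta> where "\<delta> = dist z1 z2"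
  have dz: "\<bar>apply_bcontfun z1 s - apply_bcontfun z2 s\<bar> \<le> \<delta>"
    using dist_bounded[of z1 s z2] by (simp add: \<delta>_def dist_real_def)
  have dw: "\<bar>wz z1 s - wz z2 s\<bar> \<le> rho s * \<delta>"
  proof -
    have "wz z1 s - wz z2 s = rho s * (apply_bcontfun z1 s - apply_bcontfun z2 s)"
      unfolding wz_def by (simp add: algebra_simps)
    then show ?thesis using dz rho_pos[of s] by (simp add: abs_mult mult_left_mono)
  qed
  have D: "0 \<le> 6 * Cc * xi * \<delta> * exp (- (2 * l1 * s))" "0 \<le> 2 * LL * \<delta> * exp (- (KK * s))"
    using Cc_nonneg LL_nonneg xi_pos by (auto simp: \<delta>_def)
  show "\<bar>gg (wz z1 s) - gg (wz z2 s)\<bar> \<le> 6 * Cc * xi * dist z1 z2 * exp (- (2 * l1 * s)) + 2 * LL * dist z1 z2 * exp (- (KK * s))"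
    unfolding \<delta>_def[symmetric]
  proof (cases "s \<ge> 0")
    case True
    have rb: "rho s \<le> 2 * exp (- (l1 * s))" using exp_cmp1[OF True] unfolding rho_def by simp
    have "\<bar>gg (wz z1 s) - gg (wz z2 s)\<bar> \<le> min (Cc * (3 * xi * exp (- (l1 * s)))) LL * \<bar>wz z1 s - wz z2 s\<bar>"
      by (rule gg_lip) (use wz_bound_pos[OF z1 True] wz_bound_pos[OF z2 True] in auto)
    also have "\<dots> \<le> (Cc * (3 * xi * exp (- (l1 * s)))) * (rho s * \<delta>)"
      using dw Cc_nonneg xi_pos by (intro mult_mono) auto
    also have "\<dots> \<le> (Cc * (3 * xi * exp (- (l1 * s)))) * (2 * exp (- (l1 * s)) * \<delta>)"
      using rb Cc_nonneg xi_pos zero_le_dist by (intro mult_left_mono mult_right_mono) (auto simp: \<delta>_def)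
    also have "\<dots> = 6 * Cc * xi * \<delta> * exp (- (2 * l1 * s))" unfolding exp_sq by simp
    finally show "\<bar>gg (wz z1 s) - gg (wz z2 s)\<bar> \<le> 6 * Cc * xi * \<delta> * exp (- (2 * l1 * s)) + 2 * LL * \<delta> * exp (- (KK * s))"
      using D by linarith
  next
    case False
    have rb: "rho s \<le> 2 * exp (- (KK * s))" using exp_cmp2[of s] False unfolding rho_def by simp
    have m: "\<bar>wz z1 s\<bar> \<le> max \<bar>wz z1 s\<bar> \<bar>wz z2 s\<bar>" "\<bar>wz z2 s\<bar> \<le> max \<bar>wz z1 s\<bar> \<bar>wz z2 s\<bar>" by auto
    have "\<bar>gg (wz z1 s) - gg (wz z2 s)\<bar> \<le> min (Cc * max \<bar>wz z1 s\<bar> \<bar>wz z2 s\<bar>) LL * \<bar>wz z1 s - wz z2 s\<bar>"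
      by (rule gg_lip[OF m])
    also have "\<dots> \<le> LL * (rho s * \<delta>)"
      using dw LL_nonneg by (intro mult_mono) auto
    also have "\<dots> \<le> LL * (2 * exp (- (KK * s)) * \<delta>)"
      using rb LL_nonneg zero_le_dist by (intro mult_left_mono mult_right_mono) (auto simp: \<delta>_def)
    also have "\<dots> = 2 * LL * \<delta> * exp (- (KK * s))" by simp
    finally show "\<bar>gg (wz z1 s) - gg (wz z2 s)\<bar> \<le> 6 * Cc * xi * \<delta> * exp (- (2 * l1 * s)) + 2 * LL * \<delta> * exp (- (KK * s))"
      using D by linarith
  qed
qed

lemma Bd_rho:
  assumes "D1 \<ge> 0" "D2 \<ge> 0"
  shows "(D1 * exp (- (2 * l1 * t)) / l1 + D2 * exp (- (KK * t)) / (KK - l1)) / (l1 - l2)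
         \<le> (D1 / l1 + D2 / (KK - l1)) / (l1 - l2) * rho t"
proof -
  have "D1 * exp (- (2 * l1 * t)) / l1 \<le> D1 / l1 * rho t"
    using exp_cmp3[of t] assms l1_pos by (simp add: divide_right_mono mult_left_mono)
  moreover have "D2 * exp (- (KK * t)) / (KK - l1) \<le> D2 / (KK - l1) * rho t"
    using assms KK_ge unfolding rho_def by (simp add: divide_right_mono mult_left_mono)
  ultimately show ?thesis using l12 by (simp add: divide_right_mono algebra_simps add_divide_distrib[symmetric])
qed

lemma Bd_pos:
  assumes "D1 \<ge> 0" "D2 \<ge> 0" "t \<ge> 0"
  shows "(D1 * exp (- (2 * l1 * t)) / l1 + D2 * exp (- (KK * t)) / (KK - l1)) / (l1 - l2)
         \<le> (D1 / l1 + D2 / (KK - l1)) / (l1 - l2) * exp (- (l1 * t))"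
proof -
  have "exp (- (2 * l1 * t)) \<le> exp (- (l1 * t))" using assms l1_pos by (simp add: mult_right_mono)
  then have "D1 * exp (- (2 * l1 * t)) / l1 \<le> D1 / l1 * exp (- (l1 * t))"
    using assms l1_pos by (simp add: divide_right_mono mult_left_mono)
  moreover have "D2 * exp (- (KK * t)) / (KK - l1) \<le> D2 / (KK - l1) * exp (- (l1 * t))"
    using assms KK_ge exp_cmp1[OF assms(3)] by (simp add: divide_right_mono mult_left_mono)
  ultimately show ?thesis using l12 by (simp add: divide_right_mono algebra_simps add_divide_distrib[symmetric])
qed

end

context emden begin

definition "FF z t = Top (\<lambda>s. gg (wz z s)) t / rho t"
definition "Phi z = Bcontfun (FF z)"

lemma Top_cont: "expb D1 D2 f \<Longrightarrow> continuous_on UNIV (Top f)"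
  by (meson DERIV_isCont Top_deriv continuous_at_imp_continuous_on)

lemma Top_bound_BB: "z \<in> BB \<Longrightarrow> \<bar>Top (\<lambda>s. gg (wz z s)) t\<bar> \<le> xi / 2 * rho t"
proof -
  assume z: "z \<in> BB"
  have D: "0 \<le> 9 * Cc * xi\<^sup>2" "0 \<le> 3 * LL * xi" using Cc_nonneg LL_nonneg xi_pos by auto
  have "\<bar>Top (\<lambda>s. gg (wz z s)) t\<bar> \<le> (9 * Cc * xi\<^sup>2 / l1 + 3 * LL * xi / (KK - l1)) / (l1 - l2) * rho t"
    using expb_Top(2)[OF expb_gg[OF z], of t] Bd_rho[OF D, of t] by linarith
  also have "(9 * Cc * xi\<^sup>2 / l1 + 3 * LL * xi / (KK - l1)) / (l1 - l2) = xi * theta"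
    unfolding theta_def by (simp add: field_simps power2_eq_square)
  also have "xi * theta * rho t \<le> xi * (1/2) * rho t"
    using theta_le xi_pos rho_pos[of t] by (intro mult_right_mono mult_left_mono) auto
  finally show ?thesis by simp
qed

lemma FF_bcont: "z \<in> BB \<Longrightarrow> FF z \<in> bcontfun"
proof -
  assume z: "z \<in> BB"
  show ?thesis
  proof (rule bcontfun_normI)
    show "continuous_on UNIV (FF z)" unfolding FF_def
      using Top_cont[OF expb_gg[OF z]] rho_cont rho_pos by (intro continuous_intros) (auto, metis less_irrefl)
    fix t
    show "norm (FF z t) \<le> xi / 2"
      using Top_bound_BB[OF z, of t] rho_pos[of t] unfolding FF_def by (simp add: divide_le_eq)
  qed
qed

lemma Phi_apply: "z \<in> BB \<Longrightarrow> apply_bcontfun (Phi z) = FF z"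
  unfolding Phi_def using FF_bcont Bcontfun_inverse by blast

lemma Phi_BB: "Phi ` BB \<subseteq> BB"
proof
  fix y assume "y \<in> Phi ` BB"
  then obtain z where z: "z \<in> BB" and y: "y = Phi z" by auto
  have "\<bar>FF z t\<bar> \<le> xi" for t
    using Top_bound_BB[OF z, of t] rho_pos[of t] xi_pos unfolding FF_def by (simp add: divide_le_eq)
  then show "y \<in> BB" unfolding BB_def y using Phi_apply[OF z] by simp
qed

lemma Top_diff:
  assumes "expb D1 D2 f1" "expb E1 E2 f2"
  shows "Top f1 t - Top f2 t = Top (\<lambda>s. f1 s - f2 s) t"
  unfolding Top_def using expb_Top(1)[OF assms(1)] expb_Top(1)[OF assms(2)]
  by (simp add: integral_diff right_diff_distrib)

lemma Phi_contr:
  assumes z1: "z1 \<in> BB" and z2: "z2 \<in> BB"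
  shows "dist (Phi z1) (Phi z2) \<le> 1 / 2 * dist z1 z2"
proof (rule dist_bound)
  fix t
  define \<delta> where "\<delta> = dist z1 z2"
  have d0: "\<delta> \<ge> 0" unfolding \<delta>_def by simp
  have D: "0 \<le> 6 * Cc * xi * \<delta>" "0 \<le> 2 * LL * \<delta>" using Cc_nonneg LL_nonneg xi_pos d0 by auto
  have "\<bar>Top (\<lambda>s. gg (wz z1 s)) t - Top (\<lambda>s. gg (wz z2 s)) t\<bar> = \<bar>Top (\<lambda>s. gg (wz z1 s) - gg (wz z2 s)) t\<bar>"
    using Top_diff[OF expb_gg[OF z1] expb_gg[OF z2]] by simp
  also have "\<dots> \<le> (6 * Cc * xi * \<delta> / l1 + 2 * LL * \<delta> / (KK - l1)) / (l1 - l2) * rho t"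
    using expb_Top(2)[OF expb_gg_diff[OF z1 z2], of t] Bd_rho[OF D, of t] unfolding \<delta>_def by linarith
  also have "(6 * Cc * xi * \<delta> / l1 + 2 * LL * \<delta> / (KK - l1)) / (l1 - l2) \<le> \<delta> * theta"
  proof -
    have "6 * Cc * xi * \<delta> / l1 \<le> 9 * Cc * xi * \<delta> / l1"
      using Cc_nonneg xi_pos d0 l1_pos by (intro divide_right_mono mult_right_mono) auto
    moreover have "2 * LL * \<delta> / (KK - l1) \<le> 3 * LL * \<delta> / (KK - l1)"
      using LL_nonneg d0 KK_ge by (intro divide_right_mono mult_right_mono) auto
    ultimately have "(6 * Cc * xi * \<delta> / l1 + 2 * LL * \<delta> / (KK - l1)) / (l1 - l2)
        \<le> (9 * Cc * xi * \<delta> / l1 + 3 * LL * \<delta> / (KK - l1)) / (l1 - l2)"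
      using l12 by (intro divide_right_mono) auto
    also have "\<dots> = \<delta> * theta" unfolding theta_def by (simp add: field_simps)
    finally show ?thesis .
  qed
  then have "(6 * Cc * xi * \<delta> / l1 + 2 * LL * \<delta> / (KK - l1)) / (l1 - l2) * rho t \<le> \<delta> * theta * rho t"
    using rho_pos[of t] by (intro mult_right_mono) auto
  also have "\<delta> * theta * rho t \<le> \<delta> * (1/2) * rho t"
    using theta_le d0 rho_pos[of t] by (intro mult_right_mono mult_left_mono) auto
  finally have "\<bar>Top (\<lambda>s. gg (wz z1 s)) t - Top (\<lambda>s. gg (wz z2 s)) t\<bar> \<le> \<delta> / 2 * rho t" by simp
  then have "\<bar>FF z1 t - FF z2 t\<bar> \<le> \<delta> / 2"
    using rho_pos[of t] unfolding FF_def by (simp add: divide_le_eq diff_divide_distrib[symmetric] abs_divide)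
  then show "dist (apply_bcontfun (Phi z1) t) (apply_bcontfun (Phi z2) t) \<le> 1 / 2 * dist z1 z2"
    unfolding Phi_apply[OF z1] Phi_apply[OF z2] \<delta>_def by (simp add: dist_real_def)
qed

lemma fixed_point: "\<exists>z\<in>BB. Phi z = z"
proof -
  have "\<exists>!z\<in>BB. Phi z = z"
    by (rule Banach_fix[of BB "1/2"])
       (use BB_closed BB_ne Phi_BB Phi_contr in \<open>auto simp: complete_eq_closed\<close>)
  then show ?thesis by auto
qed

end

context emden begin

definition "zst = (SOME z. z \<in> BB \<and> Phi z = z)"
definition "W = wz zst"
definition "gW s = gg (W s)"
definition "W1 t = - l1 * xi * exp (- (l1 * t)) + T1 gW t"
definition "W2 t = l1\<^sup>2 * xi * exp (- (l1 * t)) + T2 gW t"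

lemma zst: "zst \<in> BB" "Phi zst = zst"
  using someI_ex[OF fixed_point[unfolded Bex_def]] unfolding zst_def by auto

lemma W_eq: "W t = xi * exp (- (l1 * t)) + Top gW t"
proof -
  have "apply_bcontfun zst t = FF zst t" using Phi_apply[OF zst(1)] zst(2) by metis
  then have "rho t * apply_bcontfun zst t = Top gW t"
    unfolding FF_def gW_def W_def using rho_pos[of t] by simp
  then show ?thesis unfolding W_def wz_def by (simp add: W_def)
qed

lemma eW: "expb (9 * Cc * xi\<^sup>2) (3 * LL * xi) gW"
  unfolding gW_def W_def by (rule expb_gg[OF zst(1)])

lemma W_deriv: "(W has_real_derivative W1 t) (at t)"
proof -
  have "W = (\<lambda>t. xi * exp (- (l1 * t)) + Top gW t)" using W_eq by auto
  moreover have "((\<lambda>t. xi * exp (- (l1 * t)) + Top gW t) has_real_derivative W1 t) (at t)"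
    unfolding W1_def by (auto intro!: derivative_eq_intros Top_deriv[OF eW])
  ultimately show ?thesis by simp
qed

lemma W1_deriv: "(W1 has_real_derivative W2 t) (at t)"
  unfolding W1_def[abs_def] W2_def
  by (auto intro!: derivative_eq_intros T1_deriv[OF eW] simp: power2_eq_square)

lemma W_ode: "W2 t - bb * W1 t - mu * W t = gg (W t)"
proof -
  have "W2 t - bb * W1 t - mu * W t = xi * exp (- (l1 * t)) * (l1\<^sup>2 + bb * l1 - mu) + (T2 gW t - bb * T1 gW t - mu * Top gW t)"
    unfolding W2_def W1_def W_eq by (simp add: algebra_simps)
  also have "\<dots> = gW t" using l1_root T_ode[OF eW] by simp
  finally show ?thesis unfolding gW_def .
qed

lemma W_cont: "continuous_on UNIV W"
  by (meson DERIV_isCont W_deriv continuous_at_imp_continuous_on)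

lemma W_right: "t \<ge> 0 \<Longrightarrow> \<bar>W t - xi * exp (- (l1 * t))\<bar> \<le> xi / 2 * exp (- (l1 * t))"
proof -
  assume t: "t \<ge> 0"
  have D: "0 \<le> 9 * Cc * xi\<^sup>2" "0 \<le> 3 * LL * xi" using Cc_nonneg LL_nonneg xi_pos by auto
  have "\<bar>Top gW t\<bar> \<le> (9 * Cc * xi\<^sup>2 / l1 + 3 * LL * xi / (KK - l1)) / (l1 - l2) * exp (- (l1 * t))"
    using expb_Top(2)[OF eW, of t] Bd_pos[OF D t] by linarith
  also have "(9 * Cc * xi\<^sup>2 / l1 + 3 * LL * xi / (KK - l1)) / (l1 - l2) = xi * theta"
    unfolding theta_def by (simp add: field_simps power2_eq_square)
  also have "xi * theta * exp (- (l1 * t)) \<le> xi * (1/2) * exp (- (l1 * t))"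
    using theta_le xi_pos by (intro mult_right_mono mult_left_mono) auto
  finally show ?thesis using W_eq[of t] by simp
qed

lemma W_pos_right: "t \<ge> 0 \<Longrightarrow> W t > 0"
proof -
  assume t: "t \<ge> 0"
  have "xi * exp (- (l1 * t)) > 0" using xi_pos by simp
  then show ?thesis using W_right[OF t] by linarith
qed

lemma W_lim: "(W \<longlongrightarrow> 0) at_top"
proof (rule tendsto_sandwich[of "\<lambda>t. 0" _ _ "\<lambda>t. 3 / 2 * xi * exp (- (l1 * t))"])
  show "\<forall>\<^sub>F t in at_top. 0 \<le> W t"
    using eventually_ge_at_top[of 0] by eventually_elim (use W_pos_right in \<open>auto intro: less_imp_le\<close>)
  show "\<forall>\<^sub>F t in at_top. W t \<le> 3 / 2 * xi * exp (- (l1 * t))"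
  proof (rule eventually_mono[OF eventually_ge_at_top[of 0]])
    fix t :: real assume "t \<ge> 0"
    from abs_le_D1[OF W_right[OF this]] show "W t \<le> 3 / 2 * xi * exp (- (l1 * t))" by linarith
  qed
  show "((\<lambda>t. 0) \<longlongrightarrow> (0::real)) at_top" by simp
  have "((\<lambda>t. exp (- (l1 * t))) \<longlongrightarrow> 0) at_top"
    using l1_pos by real_asymp
  then show "((\<lambda>t. 3 / 2 * xi * exp (- (l1 * t))) \<longlongrightarrow> 0) at_top"
    using tendsto_mult_right_zero by blast
qed

lemma GG_pos: "w > 0 \<Longrightarrow> mu * w + gg w > 0"
proof -
  assume w: "w > 0"
  have "(c + w) powr (p - 1) < c powr (p - 1)"
    using powr_less_mono2_neg[of "p - 1" c "c + w"] p1 c_pos w by simp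
  then have "(c + w) powr (p - 1) * (c + w) < a * (1 - a) * (c + w)"
    using c_pos w c_pow by (intro mult_strict_right_mono) auto
  moreover have "(c + w) powr p = (c + w) powr (p - 1) * (c + w)"
    using c_pos w by (simp add: powr_diff)
  ultimately show ?thesis unfolding gg_def phi_def GG_def using w by simp
qed

definition "HH t = exp (- (bb * t)) * W1 t"

lemma HH_deriv: "(HH has_real_derivative (exp (- (bb * t)) * (mu * W t + gg (W t)))) (at t)"
proof -
  have "(HH has_real_derivative (- bb * exp (- (bb * t)) * W1 t + exp (- (bb * t)) * W2 t)) (at t)"
    unfolding HH_def[abs_def] by (auto intro!: derivative_eq_intros W1_deriv simp: algebra_simps)
  moreover have "- bb * exp (- (bb * t)) * W1 t + exp (- (bb * t)) * W2 t = exp (- (bb * t)) * (mu * W t + gg (W t))"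
  proof -
    have e: "W2 t = gg (W t) + bb * W1 t + mu * W t" using W_ode[of t] by linarith
    show ?thesis unfolding e by (simp add: algebra_simps)
  qed
  ultimately show ?thesis by simp
qed

lemma W_pos: "W t > 0"
proof (rule ccontr)
  assume "\<not> W t > 0"
  then have t1: "W t \<le> 0" by simp
  then have tneg: "t < 0" using W_pos_right[of t] by linarith
  have "\<forall>\<^sub>F s in at_top. W s < W 0" using W_lim W_pos_right[of 0] by (simp add: order_tendstoD(2))
  then obtain T where T: "\<And>s. s \<ge> T \<Longrightarrow> W s < W 0" by (auto simp: eventually_at_top_linorder)
  define T' where "T' = max T 1"
  have T'0: "T' > 0" and WT: "W T' < W 0" using T[of T'] by (auto simp: T'_def)
  obtain t0 where t0: "0 < t0" "t0 < T'" and mvt: "W T' - W 0 = (T' - 0) * W1 t0"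
    using MVT2[OF T'0, of W W1] W_deriv by blast
  have "T' * W1 t0 < 0" using mvt WT by simp
  then have W1t0: "W1 t0 < 0" using T'0 by (simp add: mult_less_0_iff)
  have HHt0: "HH t0 < 0" unfolding HH_def using W1t0 by (simp add: mult_pos_neg)
  define S where "S = {t..0} \<inter> {s. W s \<le> 0}"
  have Sc: "closed S" unfolding S_def
    by (intro closed_Int closed_atLeastAtMost closed_Collect_le W_cont continuous_on_const)
  have Sne: "t \<in> S" unfolding S_def using t1 tneg by auto
  have Sb: "bdd_above S" unfolding S_def by (auto intro: bdd_aboveI[of _ 0])
  define ts where "ts = Sup S"
  have tsS: "ts \<in> S" unfolding ts_def using closed_contains_Sup[OF _ Sb Sc] Sne by blast
  have ts0: "ts \<le> 0" and Wts: "W ts \<le> 0" using tsS unfolding S_def by auto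
  have above: "W s > 0" if "s > ts" for s
  proof (cases "s \<le> 0")
    case True
    have "s \<notin> S" using that cSup_upper[OF _ Sb, of s] unfolding ts_def by auto
    moreover have "s \<ge> t" using that tsS unfolding S_def by auto
    ultimately show ?thesis using True unfolding S_def by auto
  next
    case False then show ?thesis using W_pos_right by simp
  qed
  have tst0: "ts < t0" using ts0 t0 by simp
  have HHle: "HH s \<le> HH t0" if "ts \<le> s" "s \<le> t0" for s
  proof (rule DERIV_nonneg_imp_increasing_open[OF that(2)])
    fix x assume "s < x" "x < t0"
    then have "W x > 0" using above that by simp
    then have "exp (- (bb * x)) * (mu * W x + gg (W x)) \<ge> 0" using GG_pos by (simp add: less_imp_le)
    then show "\<exists>y. (HH has_real_derivative y) (at x) \<and> 0 \<le> y" using HH_deriv by blast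
  next
    show "continuous_on {s..t0} HH"
      by (meson DERIV_isCont HH_deriv continuous_at_imp_continuous_on)
  qed
  have "W t0 < W ts"
  proof (rule DERIV_neg_imp_decreasing[OF tst0])
    fix x assume "ts \<le> x" "x \<le> t0"
    then have "HH x < 0" using HHle[of x] HHt0 by linarith
    then have "W1 x < 0" unfolding HH_def by (simp add: mult_less_0_iff)
    then show "\<exists>y. (W has_real_derivative y) (at x) \<and> y < 0" using W_deriv by blast
  qed
  moreover have "W t0 > 0" using W_pos_right t0 by simp
  ultimately show False using Wts by simp
qed

lemma W1_neg: "W1 t < 0"
proof (rule ccontr)
  assume "\<not> W1 t < 0"
  then have h: "HH t \<ge> 0" unfolding HH_def by simp
  have HHge: "HH s \<ge> HH t" if "s \<ge> t" for s
  proof (rule DERIV_nonneg_imp_nondecreasing[OF that])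
    fix x
    have "exp (- (bb * x)) * (mu * W x + gg (W x)) \<ge> 0" using GG_pos[OF W_pos[of x]] by simp
    then show "\<exists>y. (HH has_real_derivative y) (at x) \<and> 0 \<le> y" using HH_deriv by blast
  qed
  have Wge: "W s \<ge> W t" if "s \<ge> t" for s
  proof (rule DERIV_nonneg_imp_nondecreasing[OF that])
    fix x assume "t \<le> x" "x \<le> s"
    then have "HH x \<ge> 0" using HHge[of x] h by linarith
    then have "W1 x \<ge> 0" unfolding HH_def by (simp add: zero_le_mult_iff)
    then show "\<exists>y. (W has_real_derivative y) (at x) \<and> 0 \<le> y" using W_deriv by blast
  qed
  have "\<forall>\<^sub>F s in at_top. W s \<ge> W t" using eventually_ge_at_top[of t] by eventually_elim (rule Wge)
  then have "0 \<ge> W t" using tendsto_lowerbound[OF W_lim] by simp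
  then show False using W_pos[of t] by simp
qed

end

context emden begin

definition "VV t = c + W t"

lemma VV_gt: "VV t > c" unfolding VV_def using W_pos by simp
lemma VV_pos: "VV t > 0" using VV_gt c_pos by (smt (verit))
lemma VV_deriv: "(VV has_real_derivative W1 t) (at t)"
  unfolding VV_def[abs_def] by (auto intro!: derivative_eq_intros W_deriv)
lemma VV_ne: "VV t \<noteq> 0" using VV_pos[of t] by simp
lemma VV_cont: "continuous_on UNIV VV"
  by (meson DERIV_isCont VV_deriv continuous_at_imp_continuous_on)
lemma VV_ode: "W2 t - bb * W1 t + a * (a - 1) * VV t + VV t powr p = 0"
proof -
  have "gg (W t) = GG (c + W t) - mu * W t"
    unfolding gg_def phi_def using W_pos[of t] by simp
  then show ?thesis using W_ode[of t] unfolding VV_def GG_def by (simp add: algebra_simps)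
qed
lemma VV_lim: "(VV \<longlongrightarrow> c) at_top"
  unfolding VV_def[abs_def] using tendsto_add[OF tendsto_const W_lim, of c] by simp
lemma VV_strict: "s < t \<Longrightarrow> VV t < VV s"
  by (rule DERIV_neg_imp_decreasing[where f=VV]) (use VV_deriv W1_neg in blast)+

definition "UU (\<alpha>::real) x = x powr a * VV (- ln (\<alpha> * x))"
definition "UU1 \<alpha> x = x powr (a - 1) * (a * VV (- ln (\<alpha> * x)) - W1 (- ln (\<alpha> * x)))"
definition "UU2 \<alpha> x = - (x powr (a - 2) * VV (- ln (\<alpha> * x)) powr p)"

lemma UU_deriv:
  assumes "\<alpha> > 0" "x > 0"
  shows "(UU \<alpha> has_real_derivative UU1 \<alpha> x) (at x)"
proof -
  have dl: "((\<lambda>x. - ln (\<alpha> * x)) has_real_derivative (- (1 / x))) (at x)"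
    using assms by (auto intro!: derivative_eq_intros)
  have dv: "((\<lambda>x. VV (- ln (\<alpha> * x))) has_real_derivative W1 (- ln (\<alpha> * x)) * (- (1 / x))) (at x)"
    by (rule DERIV_chain2[OF VV_deriv dl])
  have "(UU \<alpha> has_real_derivative (a * x powr (a - 1) * VV (- ln (\<alpha> * x)) + x powr a * (W1 (- ln (\<alpha> * x)) * (- (1 / x))))) (at x)"
    unfolding UU_def[abs_def] using assms by (auto intro!: derivative_eq_intros dv)
  moreover have "a * x powr (a - 1) * VV (- ln (\<alpha> * x)) + x powr a * (W1 (- ln (\<alpha> * x)) * (- (1 / x))) = UU1 \<alpha> x"
  proof -
    have e: "x powr a = x powr (a - 1) * x" using assms by (simp add: powr_diff)
    show ?thesis unfolding UU1_def e using assms by (simp add: algebra_simps)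
  qed
  ultimately show ?thesis by simp
qed

lemma UU1_deriv:
  assumes "\<alpha> > 0" "x > 0"
  shows "(UU1 \<alpha> has_real_derivative UU2 \<alpha> x) (at x)"
proof -
  have dl: "((\<lambda>x. - ln (\<alpha> * x)) has_real_derivative (- (1 / x))) (at x)"
    using assms by (auto intro!: derivative_eq_intros)
  have dv: "((\<lambda>x. VV (- ln (\<alpha> * x))) has_real_derivative W1 (- ln (\<alpha> * x)) * (- (1 / x))) (at x)"
    by (rule DERIV_chain2[OF VV_deriv dl])
  have dw: "((\<lambda>x. W1 (- ln (\<alpha> * x))) has_real_derivative W2 (- ln (\<alpha> * x)) * (- (1 / x))) (at x)"
    by (rule DERIV_chain2[OF W1_deriv dl])
  define y where "y = - ln (\<alpha> * x)"
  have "(UU1 \<alpha> has_real_derivative ((a - 1) * x powr (a - 1 - 1) * (a * VV y - W1 y)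
        + x powr (a - 1) * (a * (W1 y * (- (1 / x))) - W2 y * (- (1 / x))))) (at x)"
    unfolding UU1_def[abs_def] y_def using assms by (auto intro!: derivative_eq_intros dv dw)
  moreover have "(a - 1) * x powr (a - 1 - 1) * (a * VV y - W1 y)
        + x powr (a - 1) * (a * (W1 y * (- (1 / x))) - W2 y * (- (1 / x))) = UU2 \<alpha> x"
  proof -
    have e1: "x powr (a - 1) / x = x powr (a - 2)" using assms by (simp add: powr_diff power2_eq_square)
    have e2: "x powr (a - 1 - 1) = x powr (a - 2)" by simp
    have "(a - 1) * x powr (a - 1 - 1) * (a * VV y - W1 y)
        + x powr (a - 1) * (a * (W1 y * (- (1 / x))) - W2 y * (- (1 / x)))
        = x powr (a - 2) * (W2 y - bb * W1 y + a * (a - 1) * VV y)"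
      unfolding e2 bb_def e1[symmetric] using assms by (simp add: field_simps)
    also have "\<dots> = UU2 \<alpha> x"
    proof -
      have "W2 y - bb * W1 y + a * (a - 1) * VV y = - (VV y powr p)" using VV_ode[of y] by linarith
      then show ?thesis unfolding UU2_def y_def by simp
    qed
    finally show ?thesis .
  qed
  ultimately show ?thesis by simp
qed

lemma UU2_cont: "\<alpha> > 0 \<Longrightarrow> continuous_on {0<..} (UU2 \<alpha>)"
  unfolding UU2_def
  by (intro continuous_intros continuous_on_compose2[OF VV_cont]) (auto simp: VV_pos VV_ne)

lemma key:
  fixes \<sigma> :: real
  assumes sig: "\<sigma> + a * p = a - 2"
  shows "\<exists>U :: real \<Rightarrow> real \<Rightarrow> real.
           (\<forall>\<alpha>>0.
              C2_on {0<..} (U \<alpha>) \<and>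
              (\<forall>x>0. U \<alpha> x > 0) \<and>
              (\<forall>x>0. deriv (deriv (U \<alpha>)) x + x powr \<sigma> * (U \<alpha> x) powr p = 0) \<and>
              ((\<lambda>x. U \<alpha> x / (c * x powr a)) \<longlongrightarrow> 1) (at_right 0)) \<and>
           (\<forall>\<alpha>1 \<alpha>2. \<alpha>1 > \<alpha>2 \<and> \<alpha>2 > 0 \<longrightarrow>
              (\<forall>x>0. U \<alpha>1 x > U \<alpha>2 x \<and> U \<alpha>2 x > c * x powr a))"
proof (intro exI[of _ UU] conjI)
  show "\<forall>\<alpha>>0. C2_on {0<..} (UU \<alpha>) \<and> (\<forall>x>0. UU \<alpha> x > 0) \<and>
              (\<forall>x>0. deriv (deriv (UU \<alpha>)) x + x powr \<sigma> * (UU \<alpha> x) powr p = 0) \<and>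
              ((\<lambda>x. UU \<alpha> x / (c * x powr a)) \<longlongrightarrow> 1) (at_right 0)"
  proof (intro allI impI)
  fix \<alpha> :: real assume al: "\<alpha> > 0"
  have A: "C2_on {0<..} (UU \<alpha>)" unfolding C2_on_def
    using UU_deriv[OF al] UU1_deriv[OF al] UU2_cont[OF al] by auto
  have B: "\<forall>x>0. UU \<alpha> x > 0" unfolding UU_def using VV_pos by simp
  have C: "\<forall>x>0. deriv (deriv (UU \<alpha>)) x + x powr \<sigma> * (UU \<alpha> x) powr p = 0"
  proof (intro allI impI)
    fix x :: real assume x: "x > 0"
    have "(deriv (UU \<alpha>) has_real_derivative UU2 \<alpha> x) (at x)"
      by (rule has_field_derivative_transform_within_open[OF UU1_deriv[OF al x], of "{0<..}"])
         (use x in \<open>auto intro: DERIV_imp_deriv[OF UU_deriv[OF al], symmetric]\<close>)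
    then have dd: "deriv (deriv (UU \<alpha>)) x = UU2 \<alpha> x" by (rule DERIV_imp_deriv)
    have "x powr \<sigma> * (UU \<alpha> x) powr p = x powr \<sigma> * (x powr (a * p) * VV (- ln (\<alpha> * x)) powr p)"
      unfolding UU_def using x VV_pos by (simp add: powr_mult powr_powr)
    also have "\<dots> = x powr (\<sigma> + a * p) * VV (- ln (\<alpha> * x)) powr p"
      by (simp add: powr_add)
    also have "\<dots> = x powr (a - 2) * VV (- ln (\<alpha> * x)) powr p" using sig by simp
    finally show "deriv (deriv (UU \<alpha>)) x + x powr \<sigma> * (UU \<alpha> x) powr p = 0"
      unfolding dd UU2_def by simp
  qed
  have D: "((\<lambda>x. UU \<alpha> x / (c * x powr a)) \<longlongrightarrow> 1) (at_right 0)"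
  proof -
    have f: "filterlim (\<lambda>x. - ln (\<alpha> * x)) at_top (at_right 0)" using al by real_asymp
    have "((\<lambda>x. VV (- ln (\<alpha> * x))) \<longlongrightarrow> c) (at_right 0)"
      by (rule filterlim_compose[OF VV_lim f])
    then have "((\<lambda>x. VV (- ln (\<alpha> * x)) / c) \<longlongrightarrow> c / c) (at_right 0)"
      by (intro tendsto_divide tendsto_const) (use c_pos in auto)
    then have l: "((\<lambda>x. VV (- ln (\<alpha> * x)) / c) \<longlongrightarrow> 1) (at_right 0)" using c_pos by simp
    have "\<forall>\<^sub>F x in at_right 0. VV (- ln (\<alpha> * x)) / c = UU \<alpha> x / (c * x powr a)"
    proof (rule eventually_mono[OF eventually_at_right_less])
      fix x :: real assume "0 < x"
      then show "VV (- ln (\<alpha> * x)) / c = UU \<alpha> x / (c * x powr a)"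
        unfolding UU_def by simp
    qed
    then show ?thesis using l by (rule Lim_transform_eventually[rotated])
  qed
  show "C2_on {0<..} (UU \<alpha>) \<and> (\<forall>x>0. UU \<alpha> x > 0) \<and>
              (\<forall>x>0. deriv (deriv (UU \<alpha>)) x + x powr \<sigma> * (UU \<alpha> x) powr p = 0) \<and>
              ((\<lambda>x. UU \<alpha> x / (c * x powr a)) \<longlongrightarrow> 1) (at_right 0)"
    using A B C D by blast
  qed
next
  show "\<forall>\<alpha>1 \<alpha>2. \<alpha>1 > \<alpha>2 \<and> \<alpha>2 > 0 \<longrightarrow> (\<forall>x>0. UU \<alpha>1 x > UU \<alpha>2 x \<and> UU \<alpha>2 x > c * x powr a)"
  proof (intro allI impI conjI)
  fix \<alpha>1 \<alpha>2 x :: real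
  assume h: "\<alpha>2 < \<alpha>1 \<and> 0 < \<alpha>2" and x: "0 < x"
  have "- ln (\<alpha>1 * x) < - ln (\<alpha>2 * x)" using h x by simp
  then have "VV (- ln (\<alpha>2 * x)) < VV (- ln (\<alpha>1 * x))" by (rule VV_strict)
  then show "UU \<alpha>2 x < UU \<alpha>1 x" unfolding UU_def using x by simp
  show "c * x powr a < UU \<alpha>2 x" unfolding UU_def using x VV_gt by (simp add: mult.commute)
  qed
qed

end

theorem theorem5p1:
  fixes \<sigma> p :: real
  assumes "\<sigma> > -2" and "p < -1 - \<sigma>"
  shows "\<exists>U :: real \<Rightarrow> real \<Rightarrow> real.
           (\<forall>\<alpha>>0.
              C2_on {0<..} (U \<alpha>) \<and>
              (\<forall>x>0. U \<alpha> x > 0) \<and>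
              (\<forall>x>0. deriv (deriv (U \<alpha>)) x + x powr \<sigma> * (U \<alpha> x) powr p = 0) \<and>
              ((\<lambda>x. U \<alpha> x / u_sing \<sigma> p x) \<longlongrightarrow> 1) (at_right 0)) \<and>
           (\<forall>\<alpha>1 \<alpha>2. \<alpha>1 > \<alpha>2 \<and> \<alpha>2 > 0 \<longrightarrow>
              (\<forall>x>0. U \<alpha>1 x > U \<alpha>2 x \<and> U \<alpha>2 x > u_sing \<sigma> p x))"
proof -
  define a where "a = expo_a \<sigma> p"
  have p1: "p < 1" using assms by simp
  have a_eq: "a = (\<sigma> + 2) / (1 - p)" unfolding a_def expo_a_def ..
  have a0: "0 < a" unfolding a_eq using assms p1 by simp
  have a1: "a < 1" unfolding a_eq using assms p1 by (simp add: divide_less_eq)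
  interpret E: emden a p by unfold_locales (use a0 a1 p1 in auto)
  have sig: "\<sigma> + a * p = a - 2"
  proof -
    have "a * (1 - p) = \<sigma> + 2" unfolding a_eq using p1 by simp
    then show ?thesis by (simp add: algebra_simps)
  qed
  have c1: "E.c = (a * (1 - a)) powr (1 / (p - 1))" by (rule E.c_def)
  have c2: "const_c \<sigma> p = (a * (1 - a)) powr (1 / (p - 1))" unfolding const_c_def a_def ..
  have us: "u_sing \<sigma> p x = E.c * x powr a" for x
    unfolding u_sing_def a_def[symmetric] c2 c1 ..
  show ?thesis unfolding us using E.key[OF sig] by simp
qed

end
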